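(* The space $\tilde D$ with the metric $d_{\tilde D}$ is separable and complete.
   Context: $D=D([0,1],\mathbb R^d)$ is the space of càdlàg functions on $[0,1]$. $\tilde D=D/\!\sim$, where $x\sim y$ iff $x\circ\lambda=y$ for some continuous strictly increasing bijection $\lambda:[0,1]\to[0,1]$, and $d_{\tilde D}([x],[y])=\inf_\lambda\|x\circ\lambda-y\|_\infty$, the infimum over all such $\lambda$. *)

theory Defs
  imports "HOL-Analysis.Analysis"
begin

text \<open>Functions are total on real; only their values on [0,1] are relevant, since the
  equivalence relation below only compares values on [0,1].\<close>

definition cadlag :: "(real \<Rightarrow> 'a::real_normed_vector) \<Rightarrow> bool" where
  "cadlag x \<longleftrightarrow>
     (\<forall>t\<in>{0..<1}. (x \<longlongrightarrow> x t) (at_right t)) \<and>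
     (\<forall>t\<in>{0<..1}. \<exists>l. (x \<longlongrightarrow> l) (at_left t))"

definition Dspace :: "(real \<Rightarrow> 'a::real_normed_vector) set" where
  "Dspace = {x. cadlag x}"

definition time_changes :: "(real \<Rightarrow> real) set" where
  "time_changes = {l. continuous_on {0..1} l \<and> strict_mono_on {0..1} l
                        \<and> bij_betw l {0..1} {0..1}}"

definition Drel :: "((real \<Rightarrow> 'a::real_normed_vector) \<times> (real \<Rightarrow> 'a)) set" where
  "Drel = {(x, y). x \<in> Dspace \<and> y \<in> Dspace \<and>
                   (\<exists>l\<in>time_changes. \<forall>t\<in>{0..1}. x (l t) = y t)}"

definition Dtilde :: "(real \<Rightarrow> 'a::real_normed_vector) set set" where
  "Dtilde = Dspace // Drel"

definition dD :: "(real \<Rightarrow> 'a::real_normed_vector) \<Rightarrow> (real \<Rightarrow> 'a) \<Rightarrow> real" where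
  "dD x y = Inf ((\<lambda>l. SUP t\<in>{0..1}. norm (x (l t) - y t)) ` time_changes)"

definition dDtilde :: "(real \<Rightarrow> 'a::real_normed_vector) set \<Rightarrow> (real \<Rightarrow> 'a) set \<Rightarrow> real" where
  "dDtilde A B = Inf {dD x y | x y. x \<in> A \<and> y \<in> B}"

end

theory Submission
  imports Defs
begin

lemma tcD:
  assumes "l \<in> time_changes"
  shows "continuous_on {0..1} l" "strict_mono_on {0..1} l" "bij_betw l {0..1} {0..1}"
  using assms unfolding time_changes_def by auto

lemma tc_range: "l \<in> time_changes \<Longrightarrow> t \<in> {0..1} \<Longrightarrow> l t \<in> {0..1}"
  using tcD(3) bij_betwE by blast

lemma tc_less: "l \<in> time_changes \<Longrightarrow> s \<in> {0..1} \<Longrightarrow> t \<in> {0..1} \<Longrightarrow> l s < l t \<longleftrightarrow> s < t"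
proof -
  assume l: "l \<in> time_changes" and st: "s \<in> {0..1}" "t \<in> {0..1}"
  have sm: "strict_mono_on {0..1} l" using tcD[OF l] by auto
  show ?thesis
  proof
    assume "l s < l t"
    show "s < t"
    proof (rule ccontr)
      assume "\<not> s < t"
      then have "t = s \<or> t < s" by auto
      then show False using sm st \<open>l s < l t\<close> unfolding strict_mono_on_def by force
    qed
  next
    assume "s < t" then show "l s < l t" using sm st unfolding strict_mono_on_def by auto
  qed
qed

lemma tc_le: "l \<in> time_changes \<Longrightarrow> s \<in> {0..1} \<Longrightarrow> t \<in> {0..1} \<Longrightarrow> l s \<le> l t \<longleftrightarrow> s \<le> t"
  using tc_less[of l t s] by (simp add: not_less[symmetric])

lemma tc_01:
  assumes l: "l \<in> time_changes" shows "l 0 = 0" "l 1 = 1"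
proof -
  have b: "l ` {0..1} = {0..1}" using tcD(3)[OF l] by (simp add: bij_betw_def)
  obtain s where s: "s \<in> {0..1}" "l s = 0" using b by (metis atLeastAtMost_iff image_iff order_refl zero_le_one)
  have "l 0 \<le> l s" using tc_le[OF l, of 0 s] s by auto
  moreover have "l 0 \<ge> 0" using tc_range[OF l, of 0] by auto
  ultimately show "l 0 = 0" using s by auto
  obtain u where u: "u \<in> {0..1}" "l u = 1" using b by (metis atLeastAtMost_iff image_iff order_refl zero_le_one)
  have "l u \<le> l 1" using tc_le[OF l, of u 1] u by auto
  moreover have "l 1 \<le> 1" using tc_range[OF l, of 1] by auto
  ultimately show "l 1 = 1" using u by auto
qed

lemma tc_mk:
  assumes c: "continuous_on {0..1} l" and m: "\<And>s t. 0 \<le> s \<Longrightarrow> s < t \<Longrightarrow> t \<le> 1 \<Longrightarrow> l s < l t"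
    and l0: "l 0 = 0" and l1: "l 1 = 1"
  shows "l \<in> time_changes"
proof -
  have sm: "strict_mono_on {0..1} l" by (rule strict_mono_onI) (use m in auto)
  have le: "l s \<le> l t" if "0 \<le> s" "s \<le> t" "t \<le> 1" for s t
    using m[of s t] that by (cases "s = t") auto
  have "l ` {0..1} = {0..1}"
  proof
    show "l ` {0..1} \<subseteq> {0..1}" using le l0 l1 by fastforce
    show "{0..1} \<subseteq> l ` {0..1}"
    proof
      fix y :: real assume y: "y \<in> {0..1}"
      obtain x where "0 \<le> x" "x \<le> 1" "l x = y" using IVT'[of l 0 y 1] c y l0 l1 by auto
      then show "y \<in> l ` {0..1}" by auto
    qed
  qed
  then have "bij_betw l {0..1} {0..1}" using strict_mono_on_imp_inj_on[OF sm] by (simp add: bij_betw_def)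
  then show ?thesis using c sm unfolding time_changes_def by auto
qed

lemma tc_id: "(\<lambda>t. t) \<in> time_changes"
  by (rule tc_mk) (auto intro: continuous_intros)

lemma tc_comp:
  assumes l: "l \<in> time_changes" and m: "m \<in> time_changes"
  shows "(\<lambda>t. l (m t)) \<in> time_changes"
proof (rule tc_mk)
  show "continuous_on {0..1} (\<lambda>t. l (m t))"
  proof (rule continuous_on_compose2[OF tcD(1)[OF l] tcD(1)[OF m]])
    show "m ` {0..1} \<subseteq> {0..1}" using tc_range[OF m] by auto
  qed
  show "l (m s) < l (m t)" if "0 \<le> s" "s < t" "t \<le> 1" for s t
    using that tc_less[OF m, of s t] tc_less[OF l, of "m s" "m t"] tc_range[OF m, of s] tc_range[OF m, of t] by auto
qed (auto simp: tc_01[OF l] tc_01[OF m])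

definition tcinv :: "(real \<Rightarrow> real) \<Rightarrow> real \<Rightarrow> real" where
  "tcinv l = inv_into {0..1} l"

lemma tcinv:
  assumes l: "l \<in> time_changes"
  shows "\<And>t. t \<in> {0..1} \<Longrightarrow> tcinv l t \<in> {0..1}"
    "\<And>t. t \<in> {0..1} \<Longrightarrow> l (tcinv l t) = t"
    "\<And>t. t \<in> {0..1} \<Longrightarrow> tcinv l (l t) = t"
    "tcinv l \<in> time_changes"
proof -
  have b: "bij_betw l {0..1} {0..1}" using tcD[OF l] by auto
  show i1: "\<And>t. t \<in> {0..1} \<Longrightarrow> tcinv l t \<in> {0..1}"
    using b unfolding tcinv_def by (metis bij_betw_def inv_into_into)
  show i2: "\<And>t. t \<in> {0..1} \<Longrightarrow> l (tcinv l t) = t"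
    using b unfolding tcinv_def by (meson bij_betw_inv_into_right)
  show i3: "\<And>t. t \<in> {0..1} \<Longrightarrow> tcinv l (l t) = t"
    using b unfolding tcinv_def by (meson bij_betw_inv_into_left)
  show "tcinv l \<in> time_changes"
  proof (rule tc_mk)
    have "continuous_on (l ` {0..1}) (tcinv l)"
      by (rule continuous_on_inv[OF tcD(1)[OF l]]) (auto simp: i3)
    then show "continuous_on {0..1} (tcinv l)" using b by (simp add: bij_betw_def)
    show "tcinv l s < tcinv l t" if "0 \<le> s" "s < t" "t \<le> 1" for s t
      using tc_less[OF l, of "tcinv l s" "tcinv l t"] i1[of s] i1[of t] i2[of s] i2[of t] that by auto
    show "tcinv l 0 = 0" using i3[of 0] tc_01[OF l] by auto
    show "tcinv l 1 = 1" using i3[of 1] tc_01[OF l] by auto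
  qed
qed

lemma cont_at_right:
  assumes c: "continuous_on {0..1} f" and t: "0 \<le> t" "t < 1"
  shows "(f \<longlongrightarrow> f t) (at_right t)"
proof -
  have e: "at_right t = at t within {t..1}"
    by (rule at_within_nhd[where S="{..<1}"]) (use t in auto)
  have "(f \<longlongrightarrow> f t) (at t within {0..1})" using c t unfolding continuous_on_def by auto
  then have "(f \<longlongrightarrow> f t) (at t within {t..1})" by (rule tendsto_within_subset) (use t in auto)
  then show ?thesis using e by simp
qed

lemma cont_at_left:
  assumes c: "continuous_on {0..1} f" and t: "0 < t" "t \<le> 1"
  shows "(f \<longlongrightarrow> f t) (at_left t)"
proof -
  have e: "at_left t = at t within {0..t}"
    by (rule at_within_nhd[where S="{0<..}"]) (use t in auto)
  have "(f \<longlongrightarrow> f t) (at t within {0..1})" using c t unfolding continuous_on_def by auto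
  then have "(f \<longlongrightarrow> f t) (at t within {0..t})" by (rule tendsto_within_subset) (use t in auto)
  then show ?thesis using e by simp
qed

lemma tc_filter_right:
  assumes l: "l \<in> time_changes" and t: "0 \<le> t" "t < 1"
  shows "filterlim l (at_right (l t)) (at_right t)"
proof -
  have "eventually (\<lambda>s. s < 1) (at_right t)" using t eventually_at_right_field by blast
  moreover have "eventually (\<lambda>s. s > t) (at_right t)" by (simp add: eventually_at_right_less)
  ultimately have "eventually (\<lambda>s. l s \<in> {l t<..} \<and> l s \<noteq> l t) (at_right t)"
  proof (rule eventually_elim2)
    fix s assume "s < 1" "s > t" then show "l s \<in> {l t<..} \<and> l s \<noteq> l t"
      using tc_less[OF l, of t s] t by auto
  qed
  then show ?thesis unfolding filterlim_at using cont_at_right[OF tcD(1)[OF l] t] by auto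
qed

lemma tc_filter_left:
  assumes l: "l \<in> time_changes" and t: "0 < t" "t \<le> 1"
  shows "filterlim l (at_left (l t)) (at_left t)"
proof -
  have "eventually (\<lambda>s. s > 0) (at_left t)" using t eventually_at_left_field by blast
  moreover have "eventually (\<lambda>s. s < t) (at_left t)" by (simp add: eventually_at_filter)
  ultimately have "eventually (\<lambda>s. l s \<in> {..<l t} \<and> l s \<noteq> l t) (at_left t)"
  proof (rule eventually_elim2)
    fix s assume "s > 0" "s < t" then show "l s \<in> {..<l t} \<and> l s \<noteq> l t"
      using tc_less[OF l, of s t] t by auto
  qed
  then show ?thesis unfolding filterlim_at using cont_at_left[OF tcD(1)[OF l] t] by auto
qed

lemma cadlag_comp:
  assumes x: "cadlag x" and l: "l \<in> time_changes"
  shows "cadlag (\<lambda>t. x (l t))"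
  unfolding cadlag_def
proof safe
  fix t :: real assume t: "t \<in> {0..<1}"
  have lt: "l t \<in> {0..<1}" using tc_range[OF l, of t] tc_less[OF l, of t 1] tc_01[OF l] t by auto
  have "(x \<longlongrightarrow> x (l t)) (at_right (l t))" using x lt unfolding cadlag_def by auto
  from filterlim_compose[OF this tc_filter_right[OF l]] t
  show "((\<lambda>t. x (l t)) \<longlongrightarrow> x (l t)) (at_right t)" by auto
next
  fix t :: real assume t: "t \<in> {0<..1}"
  have lt: "l t \<in> {0<..1}" using tc_range[OF l, of t] tc_less[OF l, of 0 t] tc_01[OF l] t by auto
  obtain L where "(x \<longlongrightarrow> L) (at_left (l t))" using x lt unfolding cadlag_def by blast
  from filterlim_compose[OF this tc_filter_left[OF l]] t
  show "\<exists>L. ((\<lambda>t. x (l t)) \<longlongrightarrow> L) (at_left t)" by auto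
qed

lemma Drel_refl: "x \<in> Dspace \<Longrightarrow> (x, x) \<in> Drel"
  unfolding Drel_def using tc_id by auto

lemma Drel_sym: assumes "(x, y) \<in> Drel" shows "(y, x) \<in> Drel"
proof -
  obtain l where l: "l \<in> time_changes" "\<forall>t\<in>{0..1}. x (l t) = y t" "x \<in> Dspace" "y \<in> Dspace"
    using assms unfolding Drel_def by auto
  have "\<forall>t\<in>{0..1}. y (tcinv l t) = x t"
    using l tcinv[OF l(1)] by metis
  then show ?thesis using l tcinv(4)[OF l(1)] unfolding Drel_def by auto
qed

lemma Drel_trans: assumes "(x, y) \<in> Drel" "(y, z) \<in> Drel" shows "(x, z) \<in> Drel"
proof -
  obtain l where l: "l \<in> time_changes" "\<forall>t\<in>{0..1}. x (l t) = y t" "x \<in> Dspace" "y \<in> Dspace"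
    using assms unfolding Drel_def by auto
  obtain m where m: "m \<in> time_changes" "\<forall>t\<in>{0..1}. y (m t) = z t" "z \<in> Dspace"
    using assms unfolding Drel_def by auto
  have "\<forall>t\<in>{0..1}. x (l (m t)) = z t" using l m tc_range[OF m(1)] by auto
  then show ?thesis using l m tc_comp[OF l(1) m(1)] unfolding Drel_def by auto
qed

lemma Drel_Dspace: "(x, y) \<in> Drel \<Longrightarrow> x \<in> Dspace \<and> y \<in> Dspace"
  unfolding Drel_def by auto

lemma Dtilde_elem:
  assumes "A \<in> Dtilde" obtains a where "a \<in> Dspace" "A = Drel `` {a}"
  using assms unfolding Dtilde_def quotient_def by auto

lemma Dtilde_sub: "A \<in> Dtilde \<Longrightarrow> y \<in> A \<Longrightarrow> y \<in> Dspace"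
  by (metis Dtilde_elem Drel_Dspace Image_singleton_iff)

lemma Dtilde_same: "A \<in> Dtilde \<Longrightarrow> y \<in> A \<Longrightarrow> z \<in> A \<Longrightarrow> (y, z) \<in> Drel"
  by (metis Dtilde_elem Drel_sym Drel_trans Image_singleton_iff)

lemma Dtilde_class: "A \<in> Dtilde \<Longrightarrow> y \<in> A \<Longrightarrow> (y, z) \<in> Drel \<Longrightarrow> z \<in> A"
  by (metis Dtilde_elem Drel_trans Image_singleton_iff)

lemma Dtilde_self: "a \<in> Dspace \<Longrightarrow> a \<in> Drel `` {a}"
  using Drel_refl by auto

lemma Dtilde_in: "a \<in> Dspace \<Longrightarrow> Drel `` {a} \<in> Dtilde"
  unfolding Dtilde_def quotient_def by auto

definition good :: "(real \<Rightarrow> 'a::real_normed_vector) \<Rightarrow> real \<Rightarrow> real \<Rightarrow> bool" where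
  "good x e b \<longleftrightarrow> (\<exists>P g. finite P \<and> P \<subseteq> {0<..b} \<and>
     (\<forall>s t. 0 \<le> s \<longrightarrow> s \<le> t \<longrightarrow> t \<le> b \<longrightarrow> (\<forall>p\<in>P. \<not>(s < p \<and> p \<le> t)) \<longrightarrow> g s = g t) \<and>
     (\<forall>t\<in>{0..b}. norm (x t - g t) < e))"

lemma good_one:
  fixes x :: "real \<Rightarrow> 'a::real_normed_vector"
  assumes x: "cadlag x" and e: "e > 0"
  shows "good x e 1"
proof -
  define T where "T = {b\<in>{0..1}. good x e b}"
  have T0: "0 \<in> T" unfolding T_def good_def
    by (rule CollectI, rule conjI, simp, rule exI[of _ "{}"], rule exI[of _ "\<lambda>_. x 0"]) (use e in auto)
  have Tne: "T \<noteq> {}" using T0 by auto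
  have Tbdd: "bdd_above T" unfolding T_def by (rule bdd_aboveI[of _ 1]) auto
  define \<sigma> where "\<sigma> = Sup T"
  have up: "b \<le> \<sigma>" if "b \<in> T" for b using cSup_upper[OF that Tbdd] \<sigma>_def by simp
  have s1: "\<sigma> \<le> 1" unfolding \<sigma>_def by (rule cSup_least[OF Tne]) (auto simp: T_def)
  have rc: "\<exists>d>t. \<forall>y>t. y < d \<longrightarrow> norm (x y - x t) < e" if "0 \<le> t" "t < 1" for t
  proof -
    have "(x \<longlongrightarrow> x t) (at_right t)" using x that unfolding cadlag_def by auto
    then have "eventually (\<lambda>y. dist (x y) (x t) < e) (at_right t)" using e by (simp add: tendsto_iff)
    then show ?thesis unfolding eventually_at_right_field by (simp add: dist_norm)
  qed
  have spos: "\<sigma> > 0"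
  proof -
    obtain d where d: "d > 0" "\<forall>y>0. y < d \<longrightarrow> norm (x y - x 0) < e" using rc[of 0] by auto
    define b where "b = min 1 (d/2)"
    have aux: "norm (x t - x 0) < e" if "t \<in> {0..b}" for t
    proof (cases "t = 0")
      case True then show ?thesis using e by simp
    next
      case False then show ?thesis using d that by (auto simp: b_def)
    qed
    have "good x e b" unfolding good_def
      by (rule exI[of _ "{}"], rule exI[of _ "\<lambda>_. x 0"]) (use aux in auto)
    then have "b \<in> T" using d unfolding T_def by (auto simp: b_def)
    then have "b \<le> \<sigma>" by (rule up)
    then show ?thesis using d by (simp add: b_def)
  qed
  obtain L where L: "(x \<longlongrightarrow> L) (at_left \<sigma>)" using x spos s1 unfolding cadlag_def by fastforce
  then have "eventually (\<lambda>y. dist (x y) L < e) (at_left \<sigma>)" using e by (simp add: tendsto_iff)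
  then obtain a where a: "a < \<sigma>" "\<forall>y>a. y < \<sigma> \<longrightarrow> norm (x y - L) < e"
    unfolding eventually_at_left_field by (auto simp: dist_norm)
  define a' where "a' = max a (\<sigma>/2)"
  have a': "a' < \<sigma>" using a spos by (simp add: a'_def)
  obtain b where b: "b \<in> T" "a' < b" using less_cSupD[OF Tne, of a'] a' \<sigma>_def by auto
  have bs: "b \<le> \<sigma>" using up[OF b(1)] .
  have bpos: "b > 0" using b spos by (simp add: a'_def)
  have "good x e b" using b(1) unfolding T_def by blast
  then obtain P g where P: "finite P" "P \<subseteq> {0<..b}"
    and cells0: "\<forall>s t. 0 \<le> s \<longrightarrow> s \<le> t \<longrightarrow> t \<le> b \<longrightarrow> (\<forall>p\<in>P. \<not>(s < p \<and> p \<le> t)) \<longrightarrow> g s = g t"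
    and appr0: "\<forall>t\<in>{0..b}. norm (x t - g t) < e"
    unfolding good_def by blast
  have cells: "g s = g t" if "0 \<le> s" "s \<le> t" "t \<le> b" "\<forall>p\<in>P. \<not>(s < p \<and> p \<le> t)" for s t
    using cells0 that by blast
  have appr: "norm (x t - g t) < e" if "t\<in>{0..b}" for t
    using appr0 that by blast
  define g1 where "g1 t = (if t < b then g t else if t < \<sigma> then L else x \<sigma>)" for t
  define P1 where "P1 = insert b (insert \<sigma> P)"
  have P1: "finite P1" "P1 \<subseteq> {0<..c}" if "c \<ge> \<sigma>" for c
    using P bpos bs spos that by (auto simp: P1_def)
  have cells1: "g1 s = g1 t" if "0 \<le> s" "s \<le> t" "(\<forall>p\<in>P1. \<not>(s < p \<and> p \<le> t))" for s t
  proof -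
    consider "t < b" | "b \<le> s" "t < \<sigma>" | "\<sigma> \<le> s" | "s < b" "b \<le> t" | "s < \<sigma>" "\<sigma> \<le> t" by linarith
    then show ?thesis
    proof cases
      case 1 then show ?thesis using cells[of s t] that by (auto simp: g1_def P1_def)
    next
      case 2
      then have "\<not> s < b" "s < \<sigma>" "\<not> t < b" using that by linarith+
      then show ?thesis using 2 by (simp add: g1_def)
    next
      case 3
      then have "\<not> s < b" "\<not> s < \<sigma>" "\<not> t < b" "\<not> t < \<sigma>" using that bs by linarith+
      then show ?thesis by (simp add: g1_def)
    next
      case 4
      have "b \<in> P1" by (simp add: P1_def)
      then show ?thesis using that(3) 4 by blast
    next
      case 5
      have "\<sigma> \<in> P1" by (simp add: P1_def)
      then show ?thesis using that(3) 5 by blast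
    qed
  qed
  have appr1: "norm (x t - g1 t) < e" if "t \<in> {0..\<sigma>}" for t
  proof -
    have "t < b \<or> (b \<le> t \<and> t < \<sigma>) \<or> t = \<sigma>" using that by auto
    then consider "t < b" | "b \<le> t" "t < \<sigma>" | "t = \<sigma>" by blast
    then show ?thesis
    proof cases
      case 1 then show ?thesis using appr[of t] that by (auto simp: g1_def)
    next
      case 2
      have "g1 t = L" using 2 by (simp add: g1_def)
      moreover have "a < t" using 2 b(2) unfolding a'_def by linarith
      ultimately show ?thesis using a(2) 2 by simp
    next
      case 3
      have "g1 t = x \<sigma>" using 3 bs by (simp add: g1_def)
      then show ?thesis using e 3 by simp
    qed
  qed
  have s1': "\<sigma> = 1"
  proof (rule ccontr)
    assume "\<sigma> \<noteq> 1" then have "\<sigma> < 1" using s1 by auto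
    then obtain d where d: "d > \<sigma>" "\<forall>y>\<sigma>. y < d \<longrightarrow> norm (x y - x \<sigma>) < e" using rc[of \<sigma>] spos by auto
    define c where "c = min 1 ((\<sigma> + d)/2)"
    have c: "\<sigma> < c" "c \<le> 1" using d \<open>\<sigma> < 1\<close> by (auto simp: c_def)
    have "good x e c" unfolding good_def
    proof (intro exI conjI allI impI)
      show "finite P1" "P1 \<subseteq> {0<..c}" using P1[of c] c by auto
      show "g1 s = g1 t" if "0 \<le> s" "s \<le> t" "t \<le> c" "\<forall>p\<in>P1. \<not> (s < p \<and> p \<le> t)" for s t
        using cells1 that by auto
      show "\<forall>t\<in>{0..c}. norm (x t - g1 t) < e"
      proof
        fix t assume t: "t \<in> {0..c}"
        show "norm (x t - g1 t) < e"
        proof (cases "t \<le> \<sigma>")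
          case True then show ?thesis using appr1 t by auto
        next
          case False
          then have "t < d" using t c d by (auto simp: c_def)
          then show ?thesis using False d bs by (auto simp: g1_def)
        qed
      qed
    qed
    then have "c \<in> T" using c spos unfolding T_def by auto
    then show False using up c by fastforce
  qed
  show "good x e 1" unfolding good_def
  proof (intro exI conjI allI impI)
    show "finite P1" "P1 \<subseteq> {0<..1}" using P1[of 1] s1' by auto
    show "g1 s = g1 t" if "0 \<le> s" "s \<le> t" "t \<le> 1" "\<forall>p\<in>P1. \<not> (s < p \<and> p \<le> t)" for s t
      using cells1 that by auto
    show "\<forall>t\<in>{0..1}. norm (x t - g1 t) < e" using appr1 s1' by auto
  qed
qed

lemma step_approx:
  fixes x :: "real \<Rightarrow> 'a::real_normed_vector"
  assumes x: "cadlag x" and e: "e > 0"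
  shows "\<exists>P w. finite P \<and> P \<subseteq> {0<..1} \<and> (\<forall>t\<in>{0..1}. norm (x t - w (card {p\<in>P. p \<le> t})) < e)"
proof -
  obtain P g where P: "finite P" "P \<subseteq> {0<..1}"
    and cells: "\<And>s t. 0 \<le> s \<Longrightarrow> s \<le> t \<Longrightarrow> t \<le> 1 \<Longrightarrow> (\<forall>p\<in>P. \<not>(s < p \<and> p \<le> t)) \<Longrightarrow> g s = g t"
    and appr: "\<And>t. t\<in>{0..1} \<Longrightarrow> norm (x t - g t) < e"
    using good_one[OF x e] unfolding good_def by blast
  define c where "c t = card {p\<in>P. p \<le> t}" for t
  have same: "g s = g t" if "s \<in> {0..1}" "t \<in> {0..1}" "c s = c t" for s t
  proof -
    have gen: "g s = g t" if "s \<in> {0..1}" "t \<in> {0..1}" "c s = c t" "s \<le> t" for s t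
    proof -
      have sub: "{p\<in>P. p \<le> s} \<subseteq> {p\<in>P. p \<le> t}" using that by auto
      have "{p\<in>P. p \<le> s} = {p\<in>P. p \<le> t}"
        by (rule card_subset_eq) (use P sub that in \<open>auto simp: c_def\<close>)
      then have "\<forall>p\<in>P. \<not>(s < p \<and> p \<le> t)" by force
      then show ?thesis using cells[of s t] that by auto
    qed
    show ?thesis
    proof (cases "s \<le> t")
      case True then show ?thesis using gen[of s t] that by blast
    next
      case False then have "t \<le> s" by simp
      then show ?thesis using gen[of t s] that by metis
    qed
  qed
  define w where "w k = g (SOME t. t \<in> {0..1} \<and> c t = k)" for k
  have "\<forall>t\<in>{0..1}. norm (x t - w (c t)) < e"
  proof
    fix t :: real assume t: "t \<in> {0..1}"
    have "\<exists>u. u \<in> {0..1} \<and> c u = c t" using t by auto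
    then have "(SOME u. u \<in> {0..1} \<and> c u = c t) \<in> {0..1} \<and> c (SOME u. u \<in> {0..1} \<and> c u = c t) = c t"
      by (rule someI_ex)
    then have "w (c t) = g t" unfolding w_def using same[OF _ t] by blast
    then show "norm (x t - w (c t)) < e" using appr t by auto
  qed
  then show ?thesis using P unfolding c_def by blast
qed

lemma cadlag_bounded:
  fixes x :: "real \<Rightarrow> 'a::real_normed_vector"
  assumes x: "cadlag x"
  shows "\<exists>B. \<forall>t\<in>{0..1}. norm (x t) \<le> B"
proof -
  obtain P w where P: "finite P" "\<forall>t\<in>{0..1}. norm (x t - w (card {p\<in>P. p \<le> t})) < 1"
    using step_approx[OF x, of 1] by auto
  define B where "B = (\<Sum>k\<le>card P. norm (w k)) + 1"
  have "norm (x t) \<le> B" if t: "t \<in> {0..1}" for t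
  proof -
    let ?k = "card {p\<in>P. p \<le> t}"
    have "?k \<le> card P" using P by (intro card_mono) auto
    then have "norm (w ?k) \<le> (\<Sum>k\<le>card P. norm (w k))"
      by (intro member_le_sum) auto
    moreover have "norm (x t) \<le> norm (w ?k) + norm (x t - w ?k)" by (rule norm_triangle_sub)
    moreover have "norm (x t - w ?k) < 1" using P(2) t by blast
    ultimately show ?thesis unfolding B_def by linarith
  qed
  then show ?thesis by blast
qed

lemma Dspace_bounded: "x \<in> Dspace \<Longrightarrow> \<exists>B. \<forall>t\<in>{0..1}. norm (x t) \<le> B"
  using cadlag_bounded unfolding Dspace_def by auto

definition stepf :: "real set \<Rightarrow> 'a list \<Rightarrow> real \<Rightarrow> 'a" where
  "stepf Q vs t = vs ! card {q\<in>Q. q \<le> t}"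

lemma Collect_insert_if: "{x\<in>insert q F. P x} = (if P q then insert q {x\<in>F. P x} else {x\<in>F. P x})"
  by auto

lemma ev_right_const:
  fixes Q :: "real set"
  assumes "finite Q" shows "eventually (\<lambda>s. {q\<in>Q. q \<le> s} = {q\<in>Q. q \<le> t}) (at_right t)"
  using assms
proof (induction Q rule: finite_induct)
  case empty then show ?case by simp
next
  case (insert q F)
  show ?case
  proof (cases "q \<le> t")
    case True
    have "eventually (\<lambda>s. s > t) (at_right t)" by (simp add: eventually_at_filter)
    with insert.IH show ?thesis
    proof eventually_elim
      case (elim s)
      then have "q \<le> s" using True by linarith
      then show ?case using elim(1) True by (simp only: Collect_insert_if if_True)
    qed
  next
    case False
    then have "eventually (\<lambda>s. s < q) (at_right t)" unfolding eventually_at_right_field by (auto intro!: exI[of _ q])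
    with insert.IH show ?thesis
    proof eventually_elim
      case (elim s)
      then have "\<not> q \<le> s" by linarith
      then show ?case using elim(1) False by (simp only: Collect_insert_if if_False)
    qed
  qed
qed

lemma ev_left_const:
  fixes Q :: "real set"
  assumes "finite Q" shows "eventually (\<lambda>s. {q\<in>Q. q \<le> s} = {q\<in>Q. q < t}) (at_left t)"
  using assms
proof (induction Q rule: finite_induct)
  case empty then show ?case by simp
next
  case (insert q F)
  have lt: "eventually (\<lambda>s. s < t) (at_left t)" by (simp add: eventually_at_filter)
  show ?case
  proof (cases "q < t")
    case True
    then have "eventually (\<lambda>s. s > q) (at_left t)" unfolding eventually_at_left_field by auto
    with insert.IH show ?thesis
    proof eventually_elim
      case (elim s)
      then have "q \<le> s" by linarith
      then show ?case using elim(1) True by (simp only: Collect_insert_if if_True)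
    qed
  next
    case False
    from insert.IH lt show ?thesis
    proof eventually_elim
      case (elim s)
      then have "\<not> q \<le> s" using False by linarith
      then show ?case using elim(1) False by (simp only: Collect_insert_if if_False)
    qed
  qed
qed

lemma stepf_cadlag:
  assumes Q: "finite Q" shows "cadlag (stepf Q vs)"
  unfolding cadlag_def
proof safe
  fix t :: real
  have "eventually (\<lambda>s. stepf Q vs s = stepf Q vs t) (at_right t)"
    using ev_right_const[OF Q, of t] by (rule eventually_mono) (simp add: stepf_def)
  then show "(stepf Q vs \<longlongrightarrow> stepf Q vs t) (at_right t)"
    by (rule tendsto_eventually)
  have "eventually (\<lambda>s. stepf Q vs s = vs ! card {q\<in>Q. q < t}) (at_left t)"
    using ev_left_const[OF Q, of t] by (rule eventually_mono) (simp add: stepf_def)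
  then show "\<exists>L. (stepf Q vs \<longlongrightarrow> L) (at_left t)"
    using tendsto_eventually by blast
qed

lemma maxmin_aux1: "u' \<ge> (u::real) \<Longrightarrow> v' = v - k \<Longrightarrow> k \<ge> 0 \<Longrightarrow> max 0 (min u' v') \<ge> max 0 (min u v) - k"
  by (auto simp: max_def min_def)

lemma maxmin_aux2: "u' = (u::real) + k \<Longrightarrow> v' \<le> v \<Longrightarrow> k \<ge> 0 \<Longrightarrow> max 0 (min u' v') \<le> max 0 (min u v) + k"
  by (auto simp: max_def min_def)

lemma bump:
  assumes cad: "0 \<le> c" "c < a" "a < d" "d \<le> 1" and r: "c < r" "r < d"
  shows "\<exists>m\<in>time_changes. m a = r \<and> (\<forall>t. t \<le> c \<or> d \<le> t \<longrightarrow> m t = t)"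
proof -
  define h where "h t = max 0 (min ((t - c) / (a - c)) ((d - t) / (d - a)))" for t
  define m where "m t = t + (r - a) * h t" for t
  have h0: "h t = 0" if "t \<le> c \<or> d \<le> t" for t
  proof -
    have "(t - c) / (a - c) \<le> 0 \<or> (d - t) / (d - a) \<le> 0"
      using that cad by (auto intro: divide_nonpos_pos)
    then show ?thesis unfolding h_def by auto
  qed
  have ha: "h a = 1" using cad by (simp add: h_def)
  have H1: "h t \<ge> h s - (t - s) / (d - a)" and H2: "h t \<le> h s + (t - s) / (a - c)" if "s < t" for s t
  proof -
    have k1: "(t - s) / (d - a) \<ge> 0" "(t - s) / (a - c) \<ge> 0" using that cad by auto
    have e1: "(t - c) / (a - c) = (s - c) / (a - c) + (t - s) / (a - c)"
      by (simp add: diff_divide_distrib)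
    have e2: "(d - t) / (d - a) = (d - s) / (d - a) - (t - s) / (d - a)"
      by (simp add: diff_divide_distrib)
    show "h t \<ge> h s - (t - s) / (d - a)" unfolding h_def
      by (rule maxmin_aux1) (use e1 e2 k1 in auto)
    show "h t \<le> h s + (t - s) / (a - c)" unfolding h_def
      by (rule maxmin_aux2) (use e1 e2 k1 in auto)
  qed
  have mono: "m s < m t" if "s < t" for s t
  proof -
    have eq: "m t - m s = (t - s) + (r - a) * (h t - h s)" by (simp add: m_def algebra_simps)
    show ?thesis
    proof (cases "r \<ge> a")
      case True
      have A: "(r - a) * (- ((t - s) / (d - a))) \<le> (r - a) * (h t - h s)"
        by (rule mult_left_mono) (use H1[OF that] True in auto)
      have A': "(r - a) * (- ((t - s) / (d - a))) = - ((r - a) * ((t - s) / (d - a)))" by simp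
      have B: "(r - a) * ((t - s) / (d - a)) < t - s"
      proof -
        have "(r - a) / (d - a) < 1" using cad r by auto
        then have "(r - a) / (d - a) * (t - s) < 1 * (t - s)" using that by (intro mult_strict_right_mono) auto
        then show ?thesis by (simp add: field_simps)
      qed
      show ?thesis using eq A A' B by linarith
    next
      case False
      have A: "(r - a) * ((t - s) / (a - c)) \<le> (r - a) * (h t - h s)"
        by (rule mult_left_mono_neg) (use H2[OF that] False in auto)
      have A': "(r - a) * ((t - s) / (a - c)) = - ((a - r) * ((t - s) / (a - c)))" by (metis minus_diff_eq mult_minus_left)
      have B: "(a - r) * ((t - s) / (a - c)) < t - s"
      proof -
        have "(a - r) / (a - c) < 1" using cad r by auto
        then have "(a - r) / (a - c) * (t - s) < 1 * (t - s)" using that by (intro mult_strict_right_mono) auto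
        then show ?thesis by (simp add: field_simps)
      qed
      show ?thesis using eq A A' B by linarith
    qed
  qed
  have "m \<in> time_changes"
  proof (rule tc_mk)
    show "continuous_on {0..1} m" unfolding m_def h_def by (intro continuous_intros) (use cad in auto)
    show "m s < m t" if "0 \<le> s" "s < t" "t \<le> 1" for s t using mono that by auto
    show "m 0 = 0" using h0[of 0] cad by (simp add: m_def)
    show "m 1 = 1" using h0[of 1] cad by (simp add: m_def)
  qed
  moreover have "m a = r" using ha by (simp add: m_def)
  moreover have "\<forall>t. t \<le> c \<or> d \<le> t \<longrightarrow> m t = t" using h0 by (simp add: m_def)
  ultimately show ?thesis by blast
qed

lemma tc_rat:
  assumes "finite P" "P \<subseteq> {0<..1}"
  shows "\<exists>l\<in>time_changes. l ` P \<subseteq> \<rat>"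
  using assms
proof (induction P rule: finite_induct)
  case empty then show ?case using tc_id by auto
next
  case (insert p F)
  obtain l where l: "l \<in> time_changes" "l ` F \<subseteq> \<rat>" using insert by auto
  show ?case
  proof (cases "l p \<in> \<rat>")
    case True then show ?thesis using l by auto
  next
    case False
    define a where "a = l p"
    have p: "0 < p" "p \<le> 1" using insert.prems by auto
    have a01: "0 < a" "a < 1"
    proof -
      have "0 < a" using tc_less[OF l(1), of 0 p] p tc_01[OF l(1)] by (simp add: a_def)
      moreover have "a \<le> 1" using tc_range[OF l(1), of p] p by (simp add: a_def)
      moreover have "a \<noteq> 1" using False by (auto simp: a_def)
      ultimately show "0 < a" "a < 1" by auto
    qed
    obtain \<delta> where \<delta>: "\<delta> > 0" "\<forall>y\<in>l ` F. y \<noteq> a \<longrightarrow> \<delta> \<le> dist a y"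
      using finite_set_avoid[of "l ` F" a] insert.hyps by auto
    define \<delta>' where "\<delta>' = min \<delta> (min a (1 - a))"
    have \<delta>': "\<delta>' > 0" "\<delta>' \<le> \<delta>" "\<delta>' \<le> a" "\<delta>' \<le> 1 - a" using \<delta> a01 by (auto simp: \<delta>'_def)
    define c where "c = a - \<delta>'/2"
    define d where "d = a + \<delta>'/2"
    obtain r where r: "r \<in> \<rat>" "c < r" "r < d" using Rats_dense_in_real[of c d] \<delta>' by (auto simp: c_def d_def)
    obtain m where m: "m \<in> time_changes" "m a = r" "\<forall>t. t \<le> c \<or> d \<le> t \<longrightarrow> m t = t"
      using bump[of c a d r] \<delta>' r by (auto simp: c_def d_def)
    have "(\<lambda>t. m (l t)) ` insert p F \<subseteq> \<rat>"
    proof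
      fix y assume "y \<in> (\<lambda>t. m (l t)) ` insert p F"
      then obtain f where f: "f \<in> insert p F" "y = m (l f)" by auto
      show "y \<in> \<rat>"
      proof (cases "f = p")
        case True then show ?thesis using f m r by (simp add: a_def)
      next
        case False
        then have fF: "f \<in> F" using f by auto
        then have lq: "l f \<in> \<rat>" using l by auto
        then have "l f \<noteq> a" using \<open>l p \<notin> \<rat>\<close> by (auto simp: a_def)
        then have "\<delta> \<le> dist a (l f)" using \<delta> fF by auto
        then have "l f \<le> c \<or> d \<le> l f" using \<delta>' by (auto simp: c_def d_def dist_real_def)
        then show ?thesis using m(3) lq f by auto
      qed
    qed
    then show ?thesis using tc_comp[OF m(1) l(1)] by blast
  qed
qed

lemma bdd_norm:
  assumes y: "y \<in> Dspace" and z: "z \<in> Dspace" and l: "l \<in> time_changes"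
  shows "bdd_above ((\<lambda>t. norm (y (l t) - z t)) ` {0..1})"
proof -
  obtain By where By: "\<forall>t\<in>{0..1}. norm (y t) \<le> By" using Dspace_bounded[OF y] by auto
  obtain Bz where Bz: "\<forall>t\<in>{0..1}. norm (z t) \<le> Bz" using Dspace_bounded[OF z] by auto
  show ?thesis
  proof (rule bdd_aboveI2)
    fix t :: real assume t: "t \<in> {0..1}"
    have "norm (y (l t) - z t) \<le> norm (y (l t)) + norm (z t)" by (rule norm_triangle_ineq4)
    also have "\<dots> \<le> By + Bz" using By Bz t tc_range[OF l t] by (intro add_mono) auto
    finally show "norm (y (l t) - z t) \<le> By + Bz" .
  qed
qed

lemma sup_nonneg:
  assumes y: "y \<in> Dspace" and z: "z \<in> Dspace" and l: "l \<in> time_changes"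
  shows "0 \<le> (SUP t\<in>{0..1}. norm (y (l t) - z t))"
proof -
  have "norm (y (l 0) - z 0) \<le> (SUP t\<in>{0..1}. norm (y (l t) - z t))"
    by (rule cSUP_upper[OF _ bdd_norm[OF y z l]]) auto
  then show ?thesis by (meson norm_ge_zero order_trans)
qed

lemma dD_nonneg:
  assumes y: "y \<in> Dspace" and z: "z \<in> Dspace"
  shows "0 \<le> dD y z"
  unfolding dD_def
  by (rule cInf_greatest) (use tc_id sup_nonneg[OF y z] in auto)

lemma dD_le:
  assumes y: "y \<in> Dspace" and z: "z \<in> Dspace" and l: "l \<in> time_changes"
    and c: "\<forall>t\<in>{0..1}. norm (y (l t) - z t) \<le> c"
  shows "dD y z \<le> c"
proof -
  have "dD y z \<le> (SUP t\<in>{0..1}. norm (y (l t) - z t))"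
    unfolding dD_def
  proof (rule cInf_lower)
    show "(SUP t\<in>{0..1}. norm (y (l t) - z t)) \<in> (\<lambda>l. SUP t\<in>{0..1}. norm (y (l t) - z t)) ` time_changes"
      using l by auto
    show "bdd_below ((\<lambda>l. SUP t\<in>{0..1}. norm (y (l t) - z t)) ` time_changes)"
      by (rule bdd_belowI2[of _ 0]) (use sup_nonneg[OF y z] in auto)
  qed
  also have "\<dots> \<le> c" by (rule cSUP_least) (use c in auto)
  finally show ?thesis .
qed

lemma dDtilde_le:
  assumes A: "A \<in> Dtilde" and B: "B \<in> Dtilde" and y: "y \<in> A" and z: "z \<in> B" and c: "dD y z \<le> c"
  shows "dDtilde A B \<le> c"
proof -
  have "dDtilde A B \<le> dD y z" unfolding dDtilde_def
  proof (rule cInf_lower)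
    show "dD y z \<in> {dD x y |x y. x \<in> A \<and> y \<in> B}" using y z by auto
    show "bdd_below {dD x y |x y. x \<in> A \<and> y \<in> B}"
      by (rule bdd_belowI[of _ 0]) (use dD_nonneg Dtilde_sub A B in blast)
  qed
  then show ?thesis using c by linarith
qed

lemma Dtilde_ne: "A \<in> Dtilde \<Longrightarrow> \<exists>a. a \<in> A"
  by (metis Dtilde_elem Dtilde_self)

lemma dDtilde_nonneg:
  assumes A: "A \<in> Dtilde" and B: "B \<in> Dtilde"
  shows "0 \<le> dDtilde A B"
  unfolding dDtilde_def
proof (rule cInf_greatest)
  obtain a b where "a \<in> A" "b \<in> B" using Dtilde_ne A B by blast
  then show "{dD x y |x y. x \<in> A \<and> y \<in> B} \<noteq> {}" by auto
  show "\<And>x. x \<in> {dD x y |x y. x \<in> A \<and> y \<in> B} \<Longrightarrow> 0 \<le> x"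
    using dD_nonneg Dtilde_sub A B by blast
qed

lemma dDtilde_lt:
  assumes A: "A \<in> Dtilde" and B: "B \<in> Dtilde" and y: "y \<in> A" and lt: "dDtilde A B < e"
  shows "\<exists>z\<in>B. \<forall>t\<in>{0..1}. norm (y t - z t) < e"
proof -
  obtain a b where ab: "a \<in> A" "b \<in> B" using Dtilde_ne A B by blast
  have ne: "{dD x y |x y. x \<in> A \<and> y \<in> B} \<noteq> {}" using ab by auto
  obtain d where "d \<in> {dD x y |x y. x \<in> A \<and> y \<in> B}" "d < e"
    using cInf_lessD[OF ne] lt unfolding dDtilde_def by blast
  then obtain y' z' where yz: "y' \<in> A" "z' \<in> B" "dD y' z' < e" by auto
  have y'D: "y' \<in> Dspace" and z'D: "z' \<in> Dspace" using yz A B Dtilde_sub by auto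
  have ne2: "(\<lambda>l. SUP t\<in>{0..1}. norm (y' (l t) - z' t)) ` time_changes \<noteq> {}" using tc_id by auto
  obtain l where l: "l \<in> time_changes" "(SUP t\<in>{0..1}. norm (y' (l t) - z' t)) < e"
    using cInf_lessD[OF ne2] yz(3) unfolding dD_def by blast
  have close: "norm (y' (l u) - z' u) < e" if u: "u \<in> {0..1}" for u
  proof -
    have "norm (y' (l u) - z' u) \<le> (SUP t\<in>{0..1}. norm (y' (l t) - z' t))"
      by (rule cSUP_upper[OF u bdd_norm[OF y'D z'D l(1)]])
    then show ?thesis using l(2) by linarith
  qed
  have "(y', y) \<in> Drel" using Dtilde_same[OF A yz(1) y] .
  then obtain \<mu> where \<mu>: "\<mu> \<in> time_changes" "\<forall>t\<in>{0..1}. y' (\<mu> t) = y t"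
    unfolding Drel_def by auto
  define lam where "lam t = tcinv l (\<mu> t)" for t
  have lam: "lam \<in> time_changes" unfolding lam_def by (rule tc_comp[OF tcinv(4)[OF l(1)] \<mu>(1)])
  define z where "z t = z' (lam t)" for t
  have zD: "z \<in> Dspace" using cadlag_comp[OF _ lam] z'D unfolding Dspace_def z_def by auto
  have "(z', z) \<in> Drel" unfolding Drel_def using z'D zD lam by (auto simp: z_def)
  then have zB: "z \<in> B" using Dtilde_class[OF B yz(2)] by blast
  have "norm (y t - z t) < e" if t: "t \<in> {0..1}" for t
  proof -
    have mt: "\<mu> t \<in> {0..1}" using tc_range[OF \<mu>(1) t] .
    have u: "lam t \<in> {0..1}" "l (lam t) = \<mu> t" using tcinv(1,2)[OF l(1) mt] by (auto simp: lam_def)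
    have "y t = y' (l (lam t))" using \<mu>(2) t u(2) by auto
    then show ?thesis using close[OF u(1)] by (simp add: z_def)
  qed
  then show ?thesis using zB by blast
qed

lemma separable_part:
  "\<exists>S :: (real \<Rightarrow> real^'n) set set. countable S \<and> S \<subseteq> Dtilde \<and>
            (\<forall>A\<in>Dtilde. \<forall>e>0. \<exists>B\<in>S. dDtilde B A < e)"
proof -
  obtain D :: "(real^'n) set" where D: "countable D" "\<And>X. open X \<Longrightarrow> X \<noteq> {} \<Longrightarrow> \<exists>d\<in>D. d \<in> X"
    using countable_dense_setE by blast
  define S0 where "S0 = (\<lambda>(Q, vs). stepf Q vs) ` ({Q. finite Q \<and> Q \<subseteq> \<rat>} \<times> lists D)"
  define S where "S = (\<lambda>s. Drel `` {s}) ` S0"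
  have "countable ({Q. finite Q \<and> Q \<subseteq> \<rat>} \<times> lists D)"
    using countable_Collect_finite_subset[OF countable_rat] D(1) by (intro countable_SIGMA) auto
  then have cS: "countable S" unfolding S_def S0_def by (intro countable_image)
  have S0D: "S0 \<subseteq> Dspace" unfolding S0_def Dspace_def using stepf_cadlag by auto
  have SD: "S \<subseteq> Dtilde" unfolding S_def using S0D Dtilde_in by auto
  have dense: "\<exists>B\<in>S. dDtilde B A < e" if A: "A \<in> Dtilde" and e: "e > 0" for A e
  proof -
    obtain x where x: "x \<in> Dspace" "A = Drel `` {x}" using Dtilde_elem[OF A] by blast
    have "e/3 > 0" using e by simp
    then obtain P w where P: "finite P" "P \<subseteq> {0<..1}"
      and Pw: "\<forall>t\<in>{0..1}. norm (x t - w (card {p\<in>P. p \<le> t})) < e/3"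
      using step_approx[of x "e/3"] x(1) unfolding Dspace_def by blast
    obtain l where l: "l \<in> time_changes" "l ` P \<subseteq> \<rat>" using tc_rat[OF P] by blast
    have "\<forall>k. \<exists>d. d \<in> D \<and> dist (w k) d < e/3"
    proof
      fix k show "\<exists>d. d \<in> D \<and> dist (w k) d < e/3" using D(2)[of "ball (w k) (e/3)"] e by auto
    qed
    from choice[OF this] obtain ap where ap0: "\<forall>k. ap k \<in> D \<and> dist (w k) (ap k) < e/3" by blast
    have ap: "\<And>k. ap k \<in> D" "\<And>k. dist (w k) (ap k) < e/3" using ap0 by auto
    define vs where "vs = map ap [0..<Suc (card P)]"
    define Q where "Q = l ` P"
    define s where "s = stepf Q vs"
    have Q: "finite Q" "Q \<subseteq> \<rat>" using P l by (auto simp: Q_def)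
    have vsD: "vs \<in> lists D" using ap by (auto simp: vs_def)
    have sS0: "s \<in> S0" unfolding S0_def s_def using Q vsD by auto
    have sD: "s \<in> Dspace" using S0D sS0 by auto
    have inj: "inj_on l {0..1}" using strict_mono_on_imp_inj_on tcD(2)[OF l(1)] by blast
    have close: "norm (s (l t) - x t) \<le> 2*e/3" if t: "t \<in> {0..1}" for t
    proof -
      have "{q\<in>Q. q \<le> l t} = l ` {p\<in>P. p \<le> t}"
        unfolding Q_def using tc_le[OF l(1) _ t] P(2) by fastforce
      moreover have "card (l ` {p\<in>P. p \<le> t}) = card {p\<in>P. p \<le> t}"
        by (rule card_image) (rule inj_on_subset[OF inj], use P(2) in auto)
      ultimately have c: "card {q\<in>Q. q \<le> l t} = card {p\<in>P. p \<le> t}" by simp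
      define k where "k = card {p\<in>P. p \<le> t}"
      have "k \<le> card P" unfolding k_def using P(1) by (intro card_mono) auto
      then have "s (l t) = ap k" unfolding s_def stepf_def c k_def[symmetric] vs_def
        by (simp del: upt_Suc add: less_Suc_eq_le)
      moreover have "norm (ap k - w k) < e/3" using ap(2)[of k] by (simp add: dist_norm norm_minus_commute)
      moreover have "norm (w k - x t) < e/3" using Pw t by (simp add: k_def norm_minus_commute)
      moreover have "norm (ap k - x t) \<le> norm (ap k - w k) + norm (w k - x t)"
        using norm_triangle_ineq[of "ap k - w k" "w k - x t"] by simp
      ultimately show ?thesis by simp
    qed
    have "dD s x \<le> 2*e/3" by (rule dD_le[OF sD x(1) l(1)]) (use close in auto)
    then have "dDtilde (Drel `` {s}) A \<le> 2*e/3"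
      by (intro dDtilde_le[OF Dtilde_in[OF sD] A Dtilde_self[OF sD]]) (use x Dtilde_self in auto)
    moreover have "Drel `` {s} \<in> S" unfolding S_def using sS0 by auto
    ultimately show ?thesis using e by (intro bexI[of _ "Drel `` {s}"]) auto
  qed
  show ?thesis using cS SD dense by blast
qed

lemma uniform_cadlag:
  fixes f :: "nat \<Rightarrow> real \<Rightarrow> 'a::banach"
  assumes c: "\<And>k. cadlag (f k)" and bd: "\<And>k t. t \<in> {0..1} \<Longrightarrow> norm (f k t - F t) \<le> b k"
    and b: "b \<longlonglongrightarrow> 0"
  shows "cadlag F"
proof -
  have smallb: "\<exists>k. \<forall>j\<ge>k. b j < \<epsilon>" if "\<epsilon> > 0" for \<epsilon>
  proof -
    have "eventually (\<lambda>j. dist (b j) 0 < \<epsilon>) sequentially" using b that by (simp add: tendsto_iff)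
    then show ?thesis unfolding eventually_sequentially by (auto simp: dist_real_def abs_less_iff)
  qed
  show ?thesis unfolding cadlag_def
  proof safe
    fix t :: real assume t: "t \<in> {0..<1}"
    show "(F \<longlongrightarrow> F t) (at_right t)"
      unfolding tendsto_iff
    proof (intro allI impI)
      fix \<epsilon> :: real assume e: "\<epsilon> > 0"
      obtain k where k: "b k < \<epsilon>/3" using smallb[of "\<epsilon>/3"] e by auto
      have "(f k \<longlongrightarrow> f k t) (at_right t)" using c t unfolding cadlag_def by auto
      then have ev1: "eventually (\<lambda>s. dist (f k s) (f k t) < \<epsilon>/3) (at_right t)" using e by (intro tendstoD) auto
      have ev2: "eventually (\<lambda>s. s \<in> {0..1}) (at_right t)"
        unfolding eventually_at_right_field using t by (intro exI[of _ 1]) auto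
      from ev1 ev2 show "eventually (\<lambda>s. dist (F s) (F t) < \<epsilon>) (at_right t)"
      proof eventually_elim
        case (elim s)
        have "norm (F s - F t) \<le> norm (f k s - F s) + norm (f k s - f k t) + norm (f k t - F t)"
          using norm_triangle_ineq[of "F s - f k s" "f k s - f k t"] norm_triangle_ineq[of "F s - f k s + (f k s - f k t)" "f k t - F t"]
          by (simp add: norm_minus_commute)
        moreover have "norm (f k s - F s) \<le> b k" using bd elim by auto
        moreover have "norm (f k t - F t) \<le> b k" using bd t by auto
        moreover have "norm (f k s - f k t) < \<epsilon>/3" using elim by (simp add: dist_norm)
        ultimately show ?case using k by (simp add: dist_norm)
      qed
    qed
  next
    fix t :: real assume t: "t \<in> {0<..1}"
    have "\<forall>k. \<exists>L. (f k \<longlongrightarrow> L) (at_left t)" using c t unfolding cadlag_def by auto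
    from choice[OF this] obtain Lf where Lf: "\<And>k. (f k \<longlongrightarrow> Lf k) (at_left t)" by blast
    have ev01: "eventually (\<lambda>s. s \<in> {0..1}) (at_left t)"
      unfolding eventually_at_left_field using t by (intro exI[of _ 0]) auto
    have LL: "norm (Lf j - Lf k) \<le> b j + b k" for j k
    proof (rule tendsto_upperbound)
      show "((\<lambda>s. norm (f j s - f k s)) \<longlongrightarrow> norm (Lf j - Lf k)) (at_left t)"
        by (intro tendsto_intros Lf)
      from ev01 show "eventually (\<lambda>s. b j + b k \<ge> norm (f j s - f k s)) (at_left t)"
      proof eventually_elim
        case (elim s)
        have "norm (f j s - f k s) \<le> norm (f j s - F s) + norm (f k s - F s)"
          using norm_triangle_ineq[of "f j s - F s" "F s - f k s"] by (simp add: norm_minus_commute)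
        then show ?case using bd[OF elim, of j] bd[OF elim, of k] by linarith
      qed
    qed simp
    have "Cauchy Lf"
    proof (rule CauchyI)
      fix \<epsilon> :: real assume e: "\<epsilon> > 0"
      obtain M where M: "\<forall>j\<ge>M. b j < \<epsilon>/2" using smallb[of "\<epsilon>/2"] e by auto
      show "\<exists>M. \<forall>m\<ge>M. \<forall>n\<ge>M. norm (Lf m - Lf n) < \<epsilon>"
      proof (intro exI allI impI)
        fix m n assume "M \<le> m" "M \<le> n"
        then have "b m < \<epsilon>/2" "b n < \<epsilon>/2" using M by auto
        then show "norm (Lf m - Lf n) < \<epsilon>" using LL[of m n] by linarith
      qed
    qed
    then obtain L where L: "Lf \<longlonglongrightarrow> L" using Cauchy_convergent_iff convergent_def by blast
    have "(F \<longlongrightarrow> L) (at_left t)"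
      unfolding tendsto_iff
    proof (intro allI impI)
      fix \<epsilon> :: real assume e: "\<epsilon> > 0"
      obtain k1 where k1: "\<forall>j\<ge>k1. b j < \<epsilon>/4" using smallb[of "\<epsilon>/4"] e by auto
      have "eventually (\<lambda>j. dist (Lf j) L < \<epsilon>/4) sequentially" using L e by (intro tendstoD) auto
      then obtain k2 where k2: "\<forall>j\<ge>k2. dist (Lf j) L < \<epsilon>/4" unfolding eventually_sequentially by auto
      define k where "k = max k1 k2"
      have kb: "b k < \<epsilon>/4" "dist (Lf k) L < \<epsilon>/4" using k1 k2 by (auto simp: k_def)
      have ev1: "eventually (\<lambda>s. dist (f k s) (Lf k) < \<epsilon>/4) (at_left t)" using Lf[of k] e by (intro tendstoD) auto
      from ev1 ev01 show "eventually (\<lambda>s. dist (F s) L < \<epsilon>) (at_left t)"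
      proof eventually_elim
        case (elim s)
        have "norm (F s - L) \<le> norm (f k s - F s) + norm (f k s - Lf k) + norm (Lf k - L)"
          using norm_triangle_ineq[of "F s - f k s" "f k s - Lf k"] norm_triangle_ineq[of "F s - f k s + (f k s - Lf k)" "Lf k - L"]
          by (simp add: norm_minus_commute)
        moreover have "norm (f k s - F s) \<le> b k" using bd elim by auto
        moreover have "norm (f k s - Lf k) < \<epsilon>/4" "norm (Lf k - L) < \<epsilon>/4"
          using kb elim by (auto simp: dist_norm)
        ultimately have "norm (F s - L) < \<epsilon>" using kb e by linarith
        then show ?case by (simp add: dist_norm)
      qed
    qed
    then show "\<exists>L. (F \<longlongrightarrow> L) (at_left t)" by blast
  qed
qed

lemma half_pow_small: "e > 0 \<Longrightarrow> \<exists>k. (1/2::real)^k < e"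
  using real_arch_pow_inv[of e "1/2::real"] by auto

lemma complete_part:
  "\<forall>X :: nat \<Rightarrow> (real \<Rightarrow> real^'n) set.
            (\<forall>n. X n \<in> Dtilde) \<and>
            (\<forall>e>0. \<exists>N. \<forall>m\<ge>N. \<forall>n\<ge>N. dDtilde (X m) (X n) < e)
            \<longrightarrow> (\<exists>A\<in>Dtilde. (\<lambda>n. dDtilde (X n) A) \<longlonglongrightarrow> 0)"
proof (intro allI impI, elim conjE)
  fix X :: "nat \<Rightarrow> (real \<Rightarrow> real^'n) set"
  assume XD: "\<forall>n. X n \<in> Dtilde" and cau: "\<forall>e>0. \<exists>N. \<forall>m\<ge>N. \<forall>n\<ge>N. dDtilde (X m) (X n) < e"
  have "\<forall>k. \<exists>N. \<forall>m\<ge>N. \<forall>n\<ge>N. dDtilde (X m) (X n) < (1/2)^k" using cau by simp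
  from choice[OF this] obtain N where N: "\<And>k m n. m \<ge> N k \<Longrightarrow> n \<ge> N k \<Longrightarrow> dDtilde (X m) (X n) < (1/2)^k"
    by blast
  define \<phi> where "\<phi> k = (\<Sum>i\<le>k. N i)" for k
  have \<phi>N: "\<phi> k \<ge> N k" for k unfolding \<phi>_def by (rule member_le_sum) auto
  have \<phi>S: "\<phi> (Suc k) \<ge> \<phi> k" for k unfolding \<phi>_def by simp
  define y where "y = rec_nat (SOME z. z \<in> X (\<phi> 0))
     (\<lambda>k yk. SOME z. z \<in> X (\<phi> (Suc k)) \<and> (\<forall>t\<in>{0..1}. norm (yk t - z t) < (1/2)^k))"
  have y0: "y 0 = (SOME z. z \<in> X (\<phi> 0))" by (simp add: y_def)
  have yS: "y (Suc k) = (SOME z. z \<in> X (\<phi> (Suc k)) \<and> (\<forall>t\<in>{0..1}. norm (y k t - z t) < (1/2)^k))" for k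
    by (simp add: y_def)
  have yX: "y k \<in> X (\<phi> k)" for k
  proof (induction k)
    case 0
    obtain a where a: "a \<in> X (\<phi> 0)" using Dtilde_ne[OF XD[rule_format]] by blast
    show ?case unfolding y0 by (rule someI[of _ a]) (rule a)
  next
    case (Suc k)
    have "dDtilde (X (\<phi> k)) (X (\<phi> (Suc k))) < (1/2)^k"
      by (rule N[OF \<phi>N[of k] order_trans[OF \<phi>N[of k] \<phi>S[of k]]])
    then obtain z where "z \<in> X (\<phi> (Suc k))" "\<forall>t\<in>{0..1}. norm (y k t - z t) < (1/2)^k"
      using dDtilde_lt[OF XD[rule_format] XD[rule_format] Suc] by blast
    then have ex: "\<exists>z. z \<in> X (\<phi> (Suc k)) \<and> (\<forall>t\<in>{0..1}. norm (y k t - z t) < (1/2)^k)" by (intro exI[of _ z]) simp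
    have "y (Suc k) \<in> X (\<phi> (Suc k)) \<and> (\<forall>t\<in>{0..1}. norm (y k t - y (Suc k) t) < (1/2)^k)"
      unfolding yS by (rule someI_ex[OF ex])
    then show ?case by (rule conjunct1)
  qed
  have ystep: "norm (y k t - y (Suc k) t) < (1/2)^k" if t: "t \<in> {0..1}" for k t
  proof -
    have "dDtilde (X (\<phi> k)) (X (\<phi> (Suc k))) < (1/2)^k"
      by (rule N[OF \<phi>N[of k] order_trans[OF \<phi>N[of k] \<phi>S[of k]]])
    then obtain z where "z \<in> X (\<phi> (Suc k))" "\<forall>t\<in>{0..1}. norm (y k t - z t) < (1/2)^k"
      using dDtilde_lt[OF XD[rule_format] XD[rule_format] yX] by blast
    then have ex: "\<exists>z. z \<in> X (\<phi> (Suc k)) \<and> (\<forall>t\<in>{0..1}. norm (y k t - z t) < (1/2)^k)" by (intro exI[of _ z]) simp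
    have "y (Suc k) \<in> X (\<phi> (Suc k)) \<and> (\<forall>t\<in>{0..1}. norm (y k t - y (Suc k) t) < (1/2)^k)"
      unfolding yS by (rule someI_ex[OF ex])
    then have "\<forall>t\<in>{0..1}. norm (y k t - y (Suc k) t) < (1/2)^k" by (rule conjunct2)
    then show ?thesis using t by blast
  qed
  have ychain: "norm (y k t - y (k + m) t) \<le> 2 * (1/2)^k - 2 * (1/2)^(k+m)" if t: "t \<in> {0..1}" for k m t
  proof (induction m)
    case 0 then show ?case by simp
  next
    case (Suc m)
    have "norm (y k t - y (k + Suc m) t) \<le> norm (y k t - y (k + m) t) + norm (y (k + m) t - y (Suc (k + m)) t)"
      using norm_triangle_ineq[of "y k t - y (k + m) t" "y (k + m) t - y (Suc (k + m)) t"] by simp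
    moreover have "norm (y (k + m) t - y (Suc (k + m)) t) < (1/2)^(k+m)" using ystep[OF t] .
    moreover have "(1/2::real)^(k + Suc m) = (1/2)^(k+m) / 2" by simp
    ultimately show ?case using Suc.IH by linarith
  qed
  have ybound: "norm (y k t - y j t) \<le> 2 * (1/2)^k" if t: "t \<in> {0..1}" and j: "j \<ge> k" for k j t
  proof -
    obtain m where jm: "j = k + m" using j le_Suc_ex by blast
    have "0 \<le> (1/2::real)^(k+m)" by simp
    then show ?thesis using ychain[OF t, of k m] unfolding jm by linarith
  qed
  have cauchy_t: "Cauchy (\<lambda>k. y k t)" if t: "t \<in> {0..1}" for t
  proof (rule CauchyI)
    fix e :: real assume e: "e > 0"
    obtain M where M: "(1/2::real)^M < e/4" using half_pow_small[of "e/4"] e by auto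
    show "\<exists>M. \<forall>m\<ge>M. \<forall>n\<ge>M. norm (y m t - y n t) < e"
    proof (intro exI allI impI)
      fix m n assume mn: "M \<le> m" "M \<le> n"
      have "norm (y m t - y n t) \<le> norm (y M t - y m t) + norm (y M t - y n t)"
        using norm_triangle_ineq[of "y m t - y M t" "y M t - y n t"] by (simp add: norm_minus_commute)
      then show "norm (y m t - y n t) < e" using ybound[OF t mn(1)] ybound[OF t mn(2)] M by linarith
    qed
  qed
  define Y where "Y t = lim (\<lambda>k. y k t)" for t
  have Ylim: "(\<lambda>k. y k t) \<longlonglongrightarrow> Y t" if t: "t \<in> {0..1}" for t
    using cauchy_t[OF t] unfolding Y_def by (simp add: Cauchy_convergent_iff convergent_LIMSEQ_iff)
  have Ybound: "norm (y k t - Y t) \<le> 2 * (1/2)^k" if t: "t \<in> {0..1}" for k t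
  proof (rule tendsto_upperbound)
    show "(\<lambda>j. norm (y k t - y j t)) \<longlonglongrightarrow> norm (y k t - Y t)"
      by (intro tendsto_intros Ylim t)
    show "eventually (\<lambda>j. 2 * (1/2)^k \<ge> norm (y k t - y j t)) sequentially"
      unfolding eventually_sequentially using ybound[OF t] by blast
  qed simp
  have yD: "y k \<in> Dspace" for k using Dtilde_sub[OF XD[rule_format] yX] .
  have "cadlag Y"
  proof (rule uniform_cadlag)
    show "cadlag (y k)" for k using yD unfolding Dspace_def by auto
    show "norm (y k t - Y t) \<le> 2 * (1/2)^k" if "t \<in> {0..1}" for k t using Ybound that .
    show "(\<lambda>k. 2 * (1/2::real)^k) \<longlonglongrightarrow> 0"
      by (intro tendsto_mult_right_zero LIMSEQ_power_zero) auto
  qed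
  then have YD: "Y \<in> Dspace" unfolding Dspace_def by auto
  define A where "A = Drel `` {Y}"
  have AD: "A \<in> Dtilde" unfolding A_def using Dtilde_in[OF YD] .
  have "(\<lambda>n. dDtilde (X n) A) \<longlonglongrightarrow> 0"
  proof (rule LIMSEQ_I)
    fix r :: real assume r: "r > 0"
    obtain k where k: "(1/2::real)^k < r/3" using half_pow_small[of "r/3"] r by auto
    show "\<exists>no. \<forall>n\<ge>no. norm (dDtilde (X n) A - 0) < r"
    proof (intro exI allI impI)
      fix n assume n: "n \<ge> \<phi> k"
      have "dDtilde (X (\<phi> k)) (X n) < (1/2)^k" by (rule N[OF \<phi>N[of k] order_trans[OF \<phi>N[of k] n]])
      then obtain z where z: "z \<in> X n" "\<forall>t\<in>{0..1}. norm (y k t - z t) < (1/2)^k"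
        using dDtilde_lt[OF XD[rule_format] XD[rule_format] yX] by blast
      have zD: "z \<in> Dspace" using Dtilde_sub[OF XD[rule_format] z(1)] .
      have zc: "norm (z t - Y t) \<le> 3 * (1/2)^k" if t: "t \<in> {0..1}" for t
      proof -
        have "norm (z t - Y t) \<le> norm (y k t - z t) + norm (y k t - Y t)"
          using norm_triangle_ineq[of "z t - y k t" "y k t - Y t"] by (simp add: norm_minus_commute)
        moreover have "norm (y k t - z t) < (1/2)^k" using z(2) t by blast
        ultimately show ?thesis using Ybound[OF t, of k] by linarith
      qed
      have dzY: "dD z Y \<le> 3 * (1/2)^k" by (rule dD_le[OF zD YD tc_id]) (use zc in auto)
      have "dDtilde (X n) A \<le> 3 * (1/2)^k"
        by (rule dDtilde_le[OF XD[rule_format] AD z(1) _ dzY]) (unfold A_def, rule Dtilde_self[OF YD])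
      moreover have "0 \<le> dDtilde (X n) A" using dDtilde_nonneg[OF XD[rule_format] AD] .
      ultimately show "norm (dDtilde (X n) A - 0) < r" using k by simp
    qed
  qed
  then show "\<exists>A\<in>Dtilde. (\<lambda>n. dDtilde (X n) A) \<longlonglongrightarrow> 0" using AD by blast
qed

theorem lemmaA2:
  shows "(\<exists>S :: (real \<Rightarrow> real^'n) set set. countable S \<and> S \<subseteq> Dtilde \<and>
            (\<forall>A\<in>Dtilde. \<forall>e>0. \<exists>B\<in>S. dDtilde B A < e))
       \<and> (\<forall>X :: nat \<Rightarrow> (real \<Rightarrow> real^'n) set.
            (\<forall>n. X n \<in> Dtilde) \<and>
            (\<forall>e>0. \<exists>N. \<forall>m\<ge>N. \<forall>n\<ge>N. dDtilde (X m) (X n) < e)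
            \<longrightarrow> (\<exists>A\<in>Dtilde. (\<lambda>n. dDtilde (X n) A) \<longlonglongrightarrow> 0))"
  using separable_part complete_part by blast

end
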